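(* Define $g(1)=1$, $g(2^k-1)=(-1)^k$ for every integer $k>1$, and $g(n)=0$ for all other integers $n\ge 0$. Let $r(n)$ be the Golay–Rudin–Shapiro sequence, defined by $r(0)=1$, $r(2n)=r(n)$, $r(2n+1)=(-1)^n r(n)$ for $n\ge 0$. Then for all $n\ge 0$, $$\det\left(g(i+j+1)\right)_{i,j=0}^{n-1}=r(n),$$ where the determinant of the empty ($n=0$) matrix is $1$.
   Context: Equivalently, $r(n)=(-1)^{\rho(n)}$ where $\rho(n)$ is the number of (possibly overlapping) pairs of adjacent digits $11$ in the binary expansion of $n$. *)

theory Defs
  imports "Jordan_Normal_Form.Determinant"
begin

definition g :: "nat \<Rightarrow> int" where
  "g n = (if n = 1 then 1
          else if (\<exists>k::nat. 1 < k \<and> n = 2 ^ k - 1)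
               then (-1) ^ (THE k::nat. 1 < k \<and> n = 2 ^ k - 1)
               else 0)"

fun rs :: "nat \<Rightarrow> int" where
  "rs n = (if n = 0 then 1
           else if even n then rs (n div 2)
           else (-1) ^ (n div 2) * rs (n div 2))"

declare rs.simps [simp del]

end

theory Submission
  imports Defs
begin

lemma g_nz: assumes "g x \<noteq> 0" shows "\<exists>j\<ge>1. x + 1 = 2^j"
proof (cases "x = 1")
  case True then show ?thesis by (intro exI[of _ 1]) auto
next
  case False
  with assms obtain k::nat where "1 < k" "x = 2^k - 1" unfolding g_def by (auto split: if_splits)
  moreover have "(1::nat) \<le> 2^k" by simp
  ultimately show ?thesis by (intro exI[of _ k]) auto
qed

lemma g_pow: assumes "j \<ge> 1" shows "g (2^j - 1) = (if j = 1 then 1 else (-1)^j)"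
proof (cases "j = 1")
  case True then show ?thesis by (simp add: g_def)
next
  case False
  then have j: "1 < j" using assms by simp
  have ne: "(2::nat)^j - 1 \<noteq> 1"
  proof
    assume "(2::nat)^j - 1 = 1"
    then have "(2::nat)^j = 2^1" by (metis one_add_one Suc_diff_1 zero_less_power pos2 plus_1_eq_Suc power_one_right)
    then have "j = 1" using power_inject_exp[of "2::nat" j 1] by simp
    with j show False by simp
  qed
  have uniq: "(THE k::nat. 1 < k \<and> (2::nat)^j - 1 = 2 ^ k - 1) = j"
  proof (rule the_equality)
    fix k :: nat assume "1 < k \<and> (2::nat)^j - 1 = 2 ^ k - 1"
    then have "(2::nat)^j = 2^k"
      by (metis Suc_diff_1 zero_less_power pos2)
    then show "k = j" by (simp add: power_inject_exp)
  qed (use j in auto)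
  show ?thesis using j ne uniq unfolding g_def by auto
qed

lemma rs_0[simp]: "rs 0 = 1" by (subst rs.simps) simp
lemma rs_even: "rs (2*n) = rs n" by (cases "n = 0") (simp, subst rs.simps, simp)
lemma rs_odd: "rs (2*n+1) = (-1)^n * rs n" by (subst rs.simps) simp

lemma m1pow_eq: "even (a + b) \<Longrightarrow> (-1::int)^a = (-1)^b"
  by (metis even_add minus_one_power_iff)

lemma rs_comp: "2^e \<le> n \<Longrightarrow> n < 2^(e+1) \<Longrightarrow> rs n = (-1)^(n+e+1) * rs (2^(e+1) - 1 - n)"
proof (induction e arbitrary: n)
  case 0
  then have "n = 1" by simp
  then show ?case using rs_odd[of 0] by simp
next
  case (Suc e)
  define a where "a = n div 2"
  define a' where "a' = 2^(e+1) - 1 - a"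
  have a1: "2^e \<le> a" "a < 2^(e+1)" using Suc.prems unfolding a_def by auto
  have IH: "rs a = (-1)^(a+e+1) * rs a'" using Suc.IH[OF a1] unfolding a'_def .
  have aa: "a + a' = 2^(e+1) - 1" unfolding a'_def using a1 by simp
  have odd1: "odd (a + a')" unfolding aa by simp
  have p2: "(2::nat)^(Suc e + 1) = 2 * 2^(e+1)" by simp
  show ?case
  proof (cases "even n")
    case True
    then have nn: "n = 2*a" unfolding a_def by simp
    have n': "2^(Suc e+1) - 1 - n = 2*a' + 1" unfolding p2 nn a'_def using a1 by simp
    have id: "(-1::int)^(a+e+1) = (-1)^(n + Suc e + 1) * (-1)^a'"
      unfolding power_add[symmetric] by (rule m1pow_eq) (use odd1 nn in auto)
    have "rs n = rs a" unfolding nn by (rule rs_even)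
    also have "\<dots> = (-1)^(n + Suc e + 1) * ((-1)^a' * rs a')" by (simp only: IH id mult.assoc)
    also have "\<dots> = (-1)^(n + Suc e + 1) * rs (2^(Suc e+1) - 1 - n)" unfolding n' rs_odd ..
    finally show ?thesis .
  next
    case False
    then have nn: "n = 2*a+1" unfolding a_def by simp
    have n': "2^(Suc e+1) - 1 - n = 2*a'" unfolding p2 nn a'_def using a1 by simp
    have id: "(-1::int)^a * (-1)^(a+e+1) = (-1)^(n + Suc e + 1)"
      unfolding power_add[symmetric] by (rule m1pow_eq) (use nn in auto)
    have "rs n = (-1)^a * rs a" unfolding nn by (rule rs_odd)
    also have "\<dots> = (-1)^(n + Suc e + 1) * rs a'" by (simp only: IH id mult.assoc[symmetric])
    also have "\<dots> = (-1)^(n + Suc e + 1) * rs (2^(Suc e+1) - 1 - n)" unfolding n' rs_even ..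
    finally show ?thesis .
  qed
qed
definition revp :: "nat \<Rightarrow> nat \<Rightarrow> nat \<Rightarrow> nat" where
  "revp a b i = (if a \<le> i \<and> i \<le> b then a + b - i else i)"

lemma revp_invol: "revp a b (revp a b i) = i"
  unfolding revp_def by auto

lemma revp_permutes: "revp a b permutes {a..b}"
proof (rule bij_imp_permutes)
  show "bij_betw (revp a b) {a..b} {a..b}"
    by (rule bij_betw_byWitness[of _ "revp a b"]) (auto simp: revp_invol, auto simp: revp_def)
  show "x \<notin> {a..b} \<Longrightarrow> revp a b x = x" for x by (auto simp: revp_def)
qed

lemma revp_perm: "permutation (revp a b)"
  using revp_permutes permutation_permutes by blast

lemma sign_revp: "sign (revp a (a+d)) = (-1::int)^((d+1) div 2)"
proof (induction d arbitrary: a rule: less_induct)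
  case (less d)
  show ?case
  proof (cases "d \<le> 1")
    case True
    then consider "d = 0" | "d = 1" by linarith
    then show ?thesis
    proof cases
      case 1
      then have "revp a (a+d) = id" by (auto simp: revp_def fun_eq_iff)
      then show ?thesis using 1 by simp
    next
      case 2
      then have "revp a (a+d) = transpose a (a+1)" by (auto simp: revp_def fun_eq_iff transpose_def)
      then show ?thesis using 2 by (simp add: sign_swap_id)
    qed
  next
    case False
    then have eq: "revp a (a+d) = transpose a (a+d) \<circ> revp (a+1) (a+1+(d-2))"
      by (auto simp: revp_def fun_eq_iff transpose_def)
    have "sign (revp a (a+d)) = sign (transpose a (a+d)) * sign (revp (a+1) (a+1+(d-2)))"
      unfolding eq by (rule sign_compose) (auto simp: revp_perm permutation_swap_id)
    also have "\<dots> = - ((-1::int)^((d-2+1) div 2))" using less.IH[of "d-2" "a+1"] False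
      by (simp add: sign_swap_id)
    also have "\<dots> = (-1)^((d+1) div 2)"
    proof -
      have "(d+1) div 2 = Suc ((d-2+1) div 2)" using False by presburger
      then show ?thesis by simp
    qed
    finally show ?thesis .
  qed
qed
definition D :: "nat \<Rightarrow> int" where
  "D n = (\<Sum>p\<in>{p. p permutes {0..<n}}. signof p * (\<Prod>i\<in>{0..<n}. g (i + p i + 1)))"

lemma det_D: "det (mat n n (\<lambda>(i, j). g (i + j + 1))) = D n"
  unfolding D_def by (subst det_def'[of _ n]) (auto intro!: sum.cong prod.cong simp: permutes_in_image)

lemma force:
  assumes "a < n" "b < n" "g (a+b+1) \<noteq> 0" "2^e \<le> a+1" "n < 2^(e+1)"
  shows "a + b + 2 = 2^(e+1)"
proof -
  obtain j where j: "j \<ge> 1" "a + b + 1 + 1 = 2^j" using g_nz[OF assms(3)] by blast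
  have "(2::nat)^e < 2^j" using j assms(4) by linarith
  then have "e < j" using power_strict_increasing_iff[of "2::nat" e j] by simp
  moreover have "(2::nat)^j < 2^(e+2)" using j assms(1,2,5) by simp
  then have "j < e+2" using power_strict_increasing_iff[of "2::nat" j "e+2"] by simp
  ultimately have "j = e+1" by simp
  then show ?thesis using j by simp
qed

lemma step:
  assumes n1: "2^e \<le> n" and n2: "n < 2^(e+1)"
  defines "m \<equiv> 2^(e+1) - 1 - n"
  shows "D n = (-1)^(n - 2^e) * g (2^(e+1) - 1)^(n - m) * D m"
proof -
  define N where "N = (2::nat)^(e+1) - 2"
  define \<tau> where "\<tau> = revp m (n-1)"
  have npos: "n \<ge> 1" using n1 by (metis le_trans one_le_numeral one_le_power)
  have mn: "m < n" "m \<le> n" unfolding m_def using n1 n2 by auto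
  have mN: "m + (n - 1) = N" unfolding m_def N_def using n1 n2 npos by simp
  have tau_perm: "\<tau> permutes {0..<n}"
    unfolding \<tau>_def by (rule permutes_subset[OF revp_permutes]) (use npos in auto)
  have tau_U: "\<tau> i = N - i" if "m \<le> i" "i < n" for i
    using that mN unfolding \<tau>_def revp_def by auto
  have tau_L: "\<tau> i = i" if "i < m" for i
    using that unfolding \<tau>_def revp_def by auto
  have tau_out: "\<tau> i = i" if "i \<ge> n" for i
    using that npos unfolding \<tau>_def revp_def by auto
  define ext where "ext q = q \<circ> \<tau>" for q :: "nat \<Rightarrow> nat"
  define P where "P k = {p. p permutes {0..<k}}" for k :: nat
  define t where "t k p = (signof p :: int) * (\<Prod>i\<in>{0..<k}. g (i + p i + 1))" for k :: nat and p
  have DP: "D k = sum (t k) (P k)" for k unfolding D_def P_def t_def ..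
  have extP: "ext q \<in> P n" if "q \<in> P m" for q
  proof -
    have "q permutes {0..<n}" using that mn unfolding P_def by (auto intro: permutes_subset)
    then show ?thesis unfolding ext_def P_def by (auto intro: permutes_compose[OF tau_perm])
  qed
  have forced: "p \<in> ext ` P m" if pP: "p \<in> P n" and nz: "\<forall>i<n. g (i + p i + 1) \<noteq> 0" for p
  proof -
    have pp: "p permutes {0..<n}" using pP unfolding P_def by simp
    have plt: "p i < n" if "i < n" for i using permutes_in_image[OF pp] that by simp
    have pout: "p i = i" if "i \<ge> n" for i using permutes_not_in[OF pp] that by simp
    have U: "p i = N - i" if "m \<le> i" "i < n" for i
    proof (cases "2^e \<le> i + 1")
      case True
      have "i + p i + 2 = 2^(e+1)" by (rule force[OF that(2) plt[OF that(2)] nz[rule_format, OF that(2)] True n2])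
      then show ?thesis unfolding N_def by simp
    next
      case False
      define c where "c = N - i"
      have c1: "c < n" "2^e \<le> c + 1" using that False mN unfolding c_def N_def by auto
      obtain r where r: "p r = c" using permutes_surj[OF pp] by (metis surj_def)
      have rn: "r < n" using r c1 pout by (metis not_le)
      have "c + r + 2 = 2^(e+1)"
        by (rule force[OF c1(1) rn _ c1(2) n2]) (use nz[rule_format, OF rn] r in \<open>simp add: add.commute\<close>)
      then have "r = i" using that False unfolding c_def N_def by simp
      then show ?thesis using r c_def by simp
    qed
    have L: "p i < m" if "i < m" for i
    proof (rule ccontr)
      assume "\<not> p i < m"
      define u where "u = p i"
      have u: "m \<le> u" "u < n" using \<open>\<not> p i < m\<close> plt[of i] that mn unfolding u_def by auto
      have j: "m \<le> N - u" "N - u < n" using u mN by auto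
      have "p (N - u) = u" using U[OF j] u mN by simp
      then have "N - u = i" using permutes_inj[OF pp] u_def by (metis injD)
      then show False using j that by simp
    qed
    define q where "q i = (if i < m then p i else i)" for i
    have qP: "q \<in> P m"
      unfolding P_def
    proof (simp, rule bij_imp_permutes)
      have inj: "inj_on q {0..<m}" using permutes_inj[OF pp] unfolding q_def inj_on_def by (auto dest: injD)
      have "q ` {0..<m} \<subseteq> {0..<m}" using L unfolding q_def by auto
      then have "q ` {0..<m} = {0..<m}" using inj by (simp add: endo_inj_surj)
      then show "bij_betw q {0..<m} {0..<m}" using inj by (simp add: bij_betw_def)
      show "x \<notin> {0..<m} \<Longrightarrow> q x = x" for x unfolding q_def by simp
    qed
    have "p = ext q"
    proof
      fix i
      show "p i = ext q i"
      proof (cases "i < m")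
        case True then show ?thesis unfolding ext_def q_def using tau_L by simp
      next
        case False
        show ?thesis
        proof (cases "i < n")
          case True
          have "N - i \<ge> m" "N - i < n" using True False mN by auto
          then show ?thesis unfolding ext_def q_def using tau_U[of i] True False U[of i] by simp
        next
          case False
          then show ?thesis unfolding ext_def q_def using tau_out[of i] pout[of i] mn by simp
        qed
      qed
    qed
    then show ?thesis using qP by blast
  qed
  define G where "G = g (2^(e+1) - 1)"
  have sig_tau: "signof \<tau> = ((-1)^(n - 2^e) :: int)"
  proof -
    have "\<tau> = revp m (m + (n - 1 - m))" unfolding \<tau>_def using mn by simp
    then have "sign \<tau> = (-1::int)^((n - 1 - m + 1) div 2)" using sign_revp by simp
    moreover have "(n - 1 - m + 1) div 2 = n - 2^e" unfolding m_def using n1 n2 by simp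
    ultimately show ?thesis by simp
  qed
  have tq: "t n (ext q) = (-1)^(n - 2^e) * G^(n - m) * t m q" if qP: "q \<in> P m" for q
  proof -
    have qp: "q permutes {0..<m}" using qP unfolding P_def by simp
    have sg: "signof (ext q) = signof q * (signof \<tau> :: int)"
      unfolding ext_def by (rule signof_compose[OF qp tau_perm])
    have pr1: "(\<Prod>i\<in>{0..<m}. g (i + ext q i + 1)) = (\<Prod>i\<in>{0..<m}. g (i + q i + 1))"
      by (rule prod.cong) (auto simp: ext_def tau_L)
    have pr2: "(\<Prod>i\<in>{m..<n}. g (i + ext q i + 1)) = (\<Prod>i\<in>{m..<n}. G)"
    proof (rule prod.cong)
      fix i assume i: "i \<in> {m..<n}"
      then have "N - i \<ge> m" using mN by auto
      then have "ext q i = N - i" unfolding ext_def using tau_U[of i] i permutes_not_in[OF qp] by simp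
      moreover have "i + 2 \<le> 2^(e+1)" proof -
        have "(2::nat) \<le> 2^(e+1)" by (metis add.commute add_0 power_increasing le_add1 one_le_numeral power_one_right)
        moreover have "i < n" using i by simp
        ultimately show ?thesis using mN unfolding N_def by linarith
      qed
      ultimately have "i + ext q i + 1 = 2^(e+1) - 1" unfolding N_def by simp
      then show "g (i + ext q i + 1) = G" unfolding G_def by simp
    qed simp
    have "(\<Prod>i\<in>{0..<n}. g (i + ext q i + 1)) = (\<Prod>i\<in>{0..<m}. g (i + q i + 1)) * G^(n-m)"
      using prod.atLeastLessThan_concat[of 0 m n "\<lambda>i. g (i + ext q i + 1)"] mn pr1 pr2 by simp
    then show ?thesis unfolding t_def sg sig_tau by (simp add: mult_ac)
  qed
  have injext: "inj_on ext (P m)"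
  proof (rule inj_onI)
    fix q1 q2 assume "ext q1 = ext q2"
    then have "q1 \<circ> \<tau> \<circ> \<tau> = q2 \<circ> \<tau> \<circ> \<tau>" unfolding ext_def by simp
    moreover have "\<tau> \<circ> \<tau> = id" unfolding \<tau>_def by (auto simp: fun_eq_iff revp_invol)
    ultimately show "q1 = q2" by (simp add: comp_assoc)
  qed
  have "D n = sum (t n) (ext ` P m)"
    unfolding DP
  proof (rule sum.mono_neutral_right)
    show "finite (P n)" unfolding P_def by (simp add: finite_permutations)
    show "ext ` P m \<subseteq> P n" using extP by auto
    show "\<forall>p\<in>P n - ext ` P m. t n p = 0"
    proof
      fix p assume "p \<in> P n - ext ` P m"
      then obtain i where "i < n" "g (i + p i + 1) = 0" using forced by blast
      then show "t n p = 0" unfolding t_def by (auto intro: prod_zero)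
    qed
  qed
  also have "\<dots> = sum (t n \<circ> ext) (P m)" by (rule sum.reindex[OF injext])
  also have "\<dots> = sum (\<lambda>q. (-1)^(n - 2^e) * G^(n - m) * t m q) (P m)"
    by (rule sum.cong) (auto simp: tq)
  also have "\<dots> = (-1)^(n - 2^e) * G^(n - m) * D m" unfolding DP by (simp add: sum_distrib_left)
  finally show ?thesis unfolding G_def .
qed
lemma D_rs: "D n = rs n"
proof (induction n rule: less_induct)
  case (less n)
  show ?case
  proof (cases "n = 0")
    case True
    then show ?thesis unfolding D_def by simp
  next
    case False
    then obtain e where e: "2^e \<le> n" "n < 2^(e+1)" using ex_power_ivl1[of 2 n] by auto
    define m where "m = 2^(e+1) - 1 - n"
    have mn: "m < n" unfolding m_def using e by auto
    have Dn: "D n = (-1)^(n - 2^e) * g (2^(e+1) - 1)^(n - m) * rs m"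
      using step[OF e] less.IH[OF mn] unfolding m_def by simp
    have rsn: "rs n = (-1)^(n+e+1) * rs m" using rs_comp[OF e] unfolding m_def .
    have "(-1::int)^(n - 2^e) * g (2^(e+1) - 1)^(n - m) = (-1)^(n+e+1)"
    proof (cases "e = 0")
      case True
      then have "n = 1" "m = 0" using e unfolding m_def by auto
      then show ?thesis using True by (simp add: g_def)
    next
      case False
      have G: "g (2^(e+1) - 1) = (-1)^(e+1)" using g_pow[of "e+1"] False by simp
      define k where "k = n - 2^e"
      have nk: "n = 2^e + k" "n - m = 2*k+1" unfolding k_def m_def using e by auto
      have ev: "even ((2::nat)^e)" using False by simp
      have ex: "(e+1)*(2*k+1) = 2*((e+1)*k) + (e+1)" by (simp add: algebra_simps)
      have "(-1::int)^(n - 2^e) * g (2^(e+1) - 1)^(n - m) = (-1)^(k + (e+1)*(2*k+1))"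
      proof -
        have "g (2^(e+1) - 1)^(n - m) = ((-1::int)^(e+1))^(2*k+1)" unfolding G nk(2) ..
        also have "\<dots> = (-1)^((e+1)*(2*k+1))" by (rule power_mult[symmetric])
        finally have X: "g (2^(e+1) - 1)^(n - m) = (-1::int)^((e+1)*(2*k+1))" .
        show ?thesis unfolding k_def[symmetric] using X by (simp only: power_add)
      qed
      also have "\<dots> = (-1)^(n+e+1)"
        by (rule m1pow_eq) (use ev in \<open>simp only: ex nk(1), presburger\<close>)
      finally show ?thesis .
    qed
    then show ?thesis using Dn rsn by simp
  qed
qed

theorem theorem5p11:
  fixes n :: nat
  shows "det (mat n n (\<lambda>(i, j). g (i + j + 1))) = rs n"
  using det_D D_rs by simp
end
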